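(* Let $d$ be a positive integer and let $l,m>90d$ be integers such that $lm$ is even. There is a directed Hamiltonian cycle $c_{l,m}$ on the rectangle $[1,l]\times[1,m]\subseteq\mathbb{Z}^2$ (with adjacency given by unit vectors) with the following features: (1) the cycle traverses, in the clockwise direction, all the edges of the boundary of the rectangle except one; (2) every edge of the cycle at distance greater than $4$ from the boundary of the rectangle is traversed in the direction $\epsilon^1$ if it lies at even distance from the top row $[1,l]\times\{m\}$, and in the direction $-\epsilon^1$ if it lies at odd distance from the top row.
   Context: A directed Hamiltonian cycle on a finite set $V\subseteq\mathbb{Z}^2$ is a cyclic ordering of all vertices of $V$ in which consecutive vertices differ by a unit vector $\pm\epsilon^1,\pm\epsilon^2$, with edges directed from each vertex to its successor. $\epsilon^1=(1,0)$, $\epsilon^2=(0,1)$; "clockwise" refers to the standard orientation of the plane with $\epsilon^2$ pointing up, and the boundary of the rectangle is the cycle formed by its outermost vertices. *)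

theory Defs
  imports Main
begin

type_synonym pt = "int \<times> int"

definition rect :: "int \<Rightarrow> int \<Rightarrow> pt set" where
  "rect l m = {1..l} \<times> {1..m}"

definition unit_adj :: "pt \<Rightarrow> pt \<Rightarrow> bool" where
  "unit_adj p q \<longleftrightarrow> \<bar>fst p - fst q\<bar> + \<bar>snd p - snd q\<bar> = 1"

definition is_dir_ham_cycle :: "pt set \<Rightarrow> (nat \<Rightarrow> pt) \<Rightarrow> nat \<Rightarrow> bool" where
  "is_dir_ham_cycle V c n \<longleftrightarrow>
     finite V \<and> n = card V \<and> bij_betw c {..<n} V \<and>
     (\<forall>i<n. unit_adj (c i) (c (Suc i mod n)))"

definition cycle_edges :: "(nat \<Rightarrow> pt) \<Rightarrow> nat \<Rightarrow> (pt \<times> pt) set" where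
  "cycle_edges c n = {(c i, c (Suc i mod n)) | i. i < n}"

text \<open>Edges of the boundary of the rectangle, oriented clockwise
  (e2 pointing up: rightwards along the top row, down the right column,
  leftwards along the bottom row, up the left column).\<close>
definition cw_boundary_edges :: "int \<Rightarrow> int \<Rightarrow> (pt \<times> pt) set" where
  "cw_boundary_edges l m =
     {((x, m), (x + 1, m)) | x. 1 \<le> x \<and> x < l} \<union>
     {((l, y), (l, y - 1)) | y. 1 < y \<and> y \<le> m} \<union>
     {((x, 1), (x - 1, 1)) | x. 1 < x \<and> x \<le> l} \<union>
     {((1, y), (1, y + 1)) | y. 1 \<le> y \<and> y < m}"

definition bdist :: "int \<Rightarrow> int \<Rightarrow> pt \<Rightarrow> int" where
  "bdist l m p = min (min (fst p - 1) (l - fst p)) (min (snd p - 1) (m - snd p))"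

end

theory Submission
  imports Defs
begin


definition pairs :: "'a list \<Rightarrow> ('a \<times> 'a) set" where
  "pairs xs = set (zip xs (tl xs))"

lemma pairs_Nil[simp]: "pairs [] = {}" by (simp add: pairs_def)
lemma pairs_single[simp]: "pairs [x] = {}" by (simp add: pairs_def)
lemma pairs_Cons2[simp]: "pairs (x # y # xs) = insert (x, y) (pairs (y # xs))"
  by (simp add: pairs_def)

lemma pairs_Cons: "xs \<noteq> [] \<Longrightarrow> pairs (x # xs) = insert (x, hd xs) (pairs xs)"
  by (cases xs) auto

lemma pairs_append: "pairs (xs @ ys) = pairs xs \<union> pairs ys \<union>
   (if xs = [] \<or> ys = [] then {} else {(last xs, hd ys)})"
proof (induction xs)
  case Nil then show ?case by simp
next
  case (Cons x xs)
  show ?case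
  proof (cases "xs = []")
    case True then show ?thesis by (cases ys) auto
  next
    case False
    then show ?thesis using Cons by (auto simp: pairs_Cons)
  qed
qed

lemma pairs_rev: "pairs (rev xs) = (\<lambda>(p, q). (q, p)) ` pairs xs"
proof (induction xs)
  case Nil then show ?case by simp
next
  case (Cons x xs)
  then show ?case by (cases "xs = []") (auto simp: pairs_append pairs_Cons hd_rev last_rev)
qed

lemma pairs_nth: "(p, q) \<in> pairs xs \<longleftrightarrow> (\<exists>i. Suc i < length xs \<and> xs ! i = p \<and> xs ! Suc i = q)"
  unfolding pairs_def in_set_zip
  apply (auto simp: nth_tl)
  apply (rule_tac x=n in exI)
  apply simp
  done

lemma concat_upto_ne: "\<forall>x. g x \<noteq> [] \<Longrightarrow> a \<le> b \<Longrightarrow> concat (map g [a..b]) \<noteq> []"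
  by (simp add: upto_rec1)

lemma hd_concat_upto: "\<forall>x. g x \<noteq> [] \<Longrightarrow> a \<le> b \<Longrightarrow> hd (concat (map g [a..b])) = hd (g a)"
  by (simp add: upto_rec1)

lemma last_upto: "a \<le> b \<Longrightarrow> last [a..b] = b"
proof (induction "nat (b - a)" arbitrary: a)
  case 0 then show ?case by simp
next
  case (Suc k) then show ?case by (simp add: upto_rec1[of a b])
qed

lemma hd_upto: "a \<le> b \<Longrightarrow> hd [a..b] = a" by (simp add: upto_rec1)

lemma last_concat_upto: "\<forall>x. g x \<noteq> [] \<Longrightarrow> a \<le> b \<Longrightarrow> last (concat (map g [a..b])) = last (g b)"
proof (induction "nat (b - a)" arbitrary: a)
  case 0 then show ?case by simp
next
  case (Suc k)
  then have "a + 1 \<le> b" by linarith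
  moreover have "last (concat (map g [a+1..b])) = last (g b)" using Suc.hyps(1)[of "a+1"] Suc.hyps(2) Suc.prems \<open>a+1\<le>b\<close> by simp
  moreover have "concat (map g [a+1..b]) \<noteq> []" using concat_upto_ne[OF Suc.prems(1)] \<open>a+1\<le>b\<close> by blast
  moreover have "concat (map g [a..b]) = g a @ concat (map g [a+1..b])" using \<open>a+1\<le>b\<close> by (simp add: upto_rec1[of a b])
  ultimately show ?case by simp
qed

lemma set_aux: "A \<union> (B \<union> C) \<union> {z} = A \<union> B \<union> insert z C" by blast

lemma pairs_concat_upto:
  assumes "\<forall>x. g x \<noteq> []"
  shows "pairs (concat (map g [a..b])) = (\<Union>x\<in>{a..b}. pairs (g x)) \<union>
           (\<lambda>x. (last (g x), hd (g (x + 1)))) ` {a..<b}"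
proof (induction "nat (b - a)" arbitrary: a)
  case 0
  then show ?case by (cases "a = b") auto
next
  case (Suc k)
  then have ab: "a + 1 \<le> b" by linarith
  have IH: "pairs (concat (map g [a+1..b])) = (\<Union>x\<in>{a+1..b}. pairs (g x)) \<union>
           (\<lambda>x. (last (g x), hd (g (x + 1)))) ` {a+1..<b}"
    using Suc by simp
  have e1: "{a..b} = insert a {a+1..b}" using ab by auto
  have e2: "(\<lambda>x. (last (g x), hd (g (x + 1)))) ` {a..<b} =
    insert (last (g a), hd (g (a+1))) ((\<lambda>x. (last (g x), hd (g (x + 1)))) ` {a+1..<b})"
  proof -
    have "{a..<b} = insert a {a+1..<b}" using ab by auto
    then show ?thesis by simp
  qed
  have ne: "concat (map g [a+1..b]) \<noteq> []" using concat_upto_ne[OF assms] ab by blast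
  have hd: "hd (concat (map g [a+1..b])) = hd (g (a+1))" using hd_concat_upto[OF assms] ab by blast
  have "pairs (concat (map g [a..b])) = pairs (g a @ concat (map g [a+1..b]))"
    using ab by (simp add: upto_rec1[of a b])
  also have "\<dots> = pairs (g a) \<union> pairs (concat (map g [a+1..b])) \<union> {(last (g a), hd (g (a+1)))}"
    using ne assms hd by (simp add: pairs_append)
  finally have X: "pairs (concat (map g [a..b])) = pairs (g a) \<union> pairs (concat (map g [a+1..b])) \<union> {(last (g a), hd (g (a+1)))}" .
  have U: "(\<Union>x\<in>{a..b}. pairs (g x)) = pairs (g a) \<union> (\<Union>x\<in>{a+1..b}. pairs (g x))" by (simp add: e1)
  show ?case unfolding X U e2 IH by (rule set_aux)
qed

lemma pairs_map_upto:
  "pairs (map f [a..b]) = (\<lambda>x. (f x, f (x + 1))) ` {a..<b}"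
proof (induction "nat (b - a)" arbitrary: a)
  case 0
  then show ?case by (cases "a = b") auto
next
  case (Suc k)
  then have ab: "a + 1 \<le> b" by linarith
  have IH: "pairs (map f [a+1..b]) = (\<lambda>x. (f x, f (x + 1))) ` {a+1..<b}"
    using Suc by simp
  have e: "{a..<b} = insert a {a+1..<b}" using ab by auto
  have "map f [a..b] = f a # map f [a+1..b]" using ab by (simp add: upto_rec1[of a b])
  moreover have "map f [a+1..b] \<noteq> []" "hd (map f [a+1..b]) = f (a+1)" using ab by (simp_all add: upto_rec1[of "a+1" b])
  ultimately have "pairs (map f [a..b]) = insert (f a, f (a+1)) (pairs (map f [a+1..b]))"
    by (simp add: pairs_Cons)
  then show ?case unfolding IH e by simp
qed

lemma length_concat_const: "(\<And>x. length (g x) = k) \<Longrightarrow> length (concat (map g xs)) = length xs * k"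
  by (induction xs) auto



definition allP :: "('a \<Rightarrow> 'a \<Rightarrow> bool) \<Rightarrow> 'a list \<Rightarrow> bool" where
  "allP P xs \<longleftrightarrow> (\<forall>(p, q)\<in>pairs xs. P p q)"

lemma allP_append: "allP P (xs @ ys) \<longleftrightarrow> allP P xs \<and> allP P ys \<and> (xs \<noteq> [] \<and> ys \<noteq> [] \<longrightarrow> P (last xs) (hd ys))"
  unfolding allP_def pairs_append by auto

lemma allP_map_upto: "allP P (map f [a..b]) \<longleftrightarrow> (\<forall>x. a \<le> x \<and> x < b \<longrightarrow> P (f x) (f (x + 1)))"
  unfolding allP_def pairs_map_upto by auto

lemma allP_rev_map_upto: "allP P (rev (map f [a..b])) \<longleftrightarrow> (\<forall>x. a \<le> x \<and> x < b \<longrightarrow> P (f (x + 1)) (f x))"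
  unfolding allP_def pairs_rev pairs_map_upto by auto

lemma allP_concat_upto: assumes "\<forall>x. g x \<noteq> []" shows "allP P (concat (map g [a..b])) \<longleftrightarrow>
   (\<forall>x. a \<le> x \<and> x \<le> b \<longrightarrow> allP P (g x)) \<and> (\<forall>x. a \<le> x \<and> x < b \<longrightarrow> P (last (g x)) (hd (g (x + 1))))"
  unfolding allP_def pairs_concat_upto[OF assms] ball_Un by fastforce

lemma allP_Cons: "allP P (x # zs) \<longleftrightarrow> (zs \<noteq> [] \<longrightarrow> P x (hd zs)) \<and> allP P zs"
  using allP_append[of P "[x]" zs] by (auto simp: allP_def)
lemma allP_Nil[simp]: "allP P []" by (simp add: allP_def)
lemma allP_single[simp]: "allP P [x]" by (simp add: allP_def)

lemma hd_map_upto[simp]: "a \<le> b \<Longrightarrow> hd (map f [a..b]) = f a" by (simp add: upto_rec1)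
lemma last_map_upto[simp]: "a \<le> b \<Longrightarrow> last (map f [a..b]) = f b" using last_upto by (simp add: last_map)
lemma hd_rev_map_upto[simp]: "a \<le> b \<Longrightarrow> hd (rev (map f [a..b])) = f b" using last_upto by (simp add: hd_rev last_map)
lemma last_rev_map_upto[simp]: "a \<le> b \<Longrightarrow> last (rev (map f [a..b])) = f a" by (simp add: last_rev upto_rec1)

definition goodP :: "int \<Rightarrow> int \<Rightarrow> pt \<Rightarrow> pt \<Rightarrow> bool" where
  "goodP l m p q \<longleftrightarrow> unit_adj p q \<and> (p = (1, m - 2) \<longrightarrow> q = (2, m - 2)) \<and>
     (4 < bdist l m p \<and> 4 < bdist l m q \<longrightarrow> q = (if even (m - snd p) then (fst p + 1, snd p) else (fst p - 1, snd p)))"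

definition bnd :: "int \<Rightarrow> int \<Rightarrow> pt list" where
  "bnd l m = [(1, m - 1), (1, m)] @ map (\<lambda>x. (x, m)) [2..l] @ rev (map (\<lambda>y. (l, y)) [1..m-1])
     @ rev (map (\<lambda>x. (x, 1)) [1..l-1]) @ map (\<lambda>y. (1, y)) [2..m-2]"

definition colp :: "int \<Rightarrow> pt list" where
  "colp m = rev (map (\<lambda>y. (2, y)) [2..m-2])"

definition zcol :: "int \<Rightarrow> pt list" where
  "zcol x = (if odd x then [(x, 2), (x, 3)] else [(x, 3), (x, 2)])"

definition zig :: "int \<Rightarrow> int \<Rightarrow> pt list" where
  "zig l m = (if even m then [] else concat (map zcol [3..l-1]))"

definition srow :: "int \<Rightarrow> int \<Rightarrow> int \<Rightarrow> pt list" where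
  "srow l m y = (if even (m - y) then map (\<lambda>x. (x, y)) [3..l-1] else rev (map (\<lambda>x. (x, y)) [3..l-1]))"

definition r0 :: "int \<Rightarrow> int" where "r0 m = (if even m then 2 else 4)"

definition snake :: "int \<Rightarrow> int \<Rightarrow> pt list" where
  "snake l m = concat (map (srow l m) [r0 m..m-1])"

definition cyc :: "int \<Rightarrow> int \<Rightarrow> pt list" where
  "cyc l m = bnd l m @ colp m @ zig l m @ snake l m @ [(2, m - 1)]"

context
  fixes l m :: int
  assumes l: "l \<ge> 10" and m: "m \<ge> 10" and ev: "even (l * m)"
begin

lemma bnd_good: "allP (goodP l m) (bnd l m)"
  using l m unfolding bnd_def
  by (simp add: allP_Cons allP_append allP_map_upto allP_rev_map_upto goodP_def unit_adj_def bdist_def)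

lemma colp_good: "allP (goodP l m) (colp m)"
  using l m unfolding colp_def
  by (simp add: allP_rev_map_upto goodP_def unit_adj_def bdist_def)

lemma srow_ne: "\<forall>y. srow l m y \<noteq> []" using l by (simp add: srow_def)
lemma zcol_ne: "\<forall>x. zcol x \<noteq> []" by (simp add: zcol_def)

lemma srow_good: "allP (goodP l m) (srow l m y)"
  using l m unfolding srow_def
  by (simp add: allP_rev_map_upto allP_map_upto goodP_def unit_adj_def)

lemma hd_srow: "hd (srow l m y) = (if even (m - y) then (3, y) else (l - 1, y))"
  using l by (simp add: srow_def)
lemma last_srow: "last (srow l m y) = (if even (m - y) then (l - 1, y) else (3, y))"
  using l by (simp add: srow_def)

lemma snake_good: "allP (goodP l m) (snake l m)"
  unfolding snake_def allP_concat_upto[OF srow_ne]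
  using l m by (auto simp: srow_good hd_srow last_srow goodP_def unit_adj_def bdist_def)

lemma zig_good: "allP (goodP l m) (zig l m)"
proof -
  have "allP (goodP l m) (concat (map zcol [3..l-1]))"
    unfolding allP_concat_upto[OF zcol_ne]
    using l m by (auto simp: zcol_def goodP_def unit_adj_def bdist_def allP_Cons)
  then show ?thesis by (simp add: zig_def allP_def)
qed


lemma zig_props: "odd m \<Longrightarrow> zig l m \<noteq> [] \<and> hd (zig l m) = (3, 2) \<and> last (zig l m) = (l - 1, 3)"
proof -
  assume "odd m"
  then have "even l" using ev by simp
  then have "odd (l - 1)" by simp
  have le: "3 \<le> l - 1" using l by simp
  note a = concat_upto_ne[OF zcol_ne le] hd_concat_upto[OF zcol_ne le] last_concat_upto[OF zcol_ne le]
  show ?thesis using \<open>odd m\<close> \<open>odd (l - 1)\<close> unfolding zig_def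
    by (simp only: a if_False simp_thms) (simp add: zcol_def)
qed

lemma snake_props: "snake l m \<noteq> [] \<and> hd (snake l m) = (if even m then (3, 2) else (l - 1, 4)) \<and> last (snake l m) = (3, m - 1)"
proof -
  have le: "r0 m \<le> m - 1" using m by (simp add: r0_def)
  note a = concat_upto_ne[OF srow_ne le] hd_concat_upto[OF srow_ne le] last_concat_upto[OF srow_ne le]
  show ?thesis unfolding snake_def
    by (simp only: a simp_thms) (simp add: hd_srow last_srow r0_def)
qed

lemma cyc_good: "allP (goodP l m) (cyc l m)"
proof -
  have i: "allP (goodP l m) (zig l m @ snake l m @ [(2, m - 1)])"
    using zig_good snake_good snake_props zig_props l m
    by (cases "even m") (auto simp: allP_append zig_def goodP_def unit_adj_def bdist_def)
  have "zig l m @ snake l m @ [(2, m - 1)] \<noteq> [] \<and> hd (zig l m @ snake l m @ [(2, m - 1)]) = (3, 2)"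
    using snake_props zig_props by (cases "even m") (auto simp: zig_def)
  then have "allP (goodP l m) (colp m @ zig l m @ snake l m @ [(2, m - 1)])"
    using i colp_good m by (simp add: allP_append colp_def goodP_def unit_adj_def bdist_def)
  moreover have "hd (colp m @ zig l m @ snake l m @ [(2, m - 1)]) = (2, m - 2)"
    using m by (simp add: colp_def)
  moreover have "last (bnd l m) = (1, m - 2)" "bnd l m \<noteq> []" using m by (simp_all add: bnd_def)
  ultimately show ?thesis
    using bnd_good l m unfolding cyc_def allP_append[of _ "bnd l m"]
    by (simp add: goodP_def unit_adj_def)
qed

lemma cyc_hd_last: "cyc l m \<noteq> [] \<and> hd (cyc l m) = (1, m - 1) \<and> last (cyc l m) = (2, m - 1)"
  by (simp add: cyc_def bnd_def)

lemma cyc_wrap: "goodP l m (last (cyc l m)) (hd (cyc l m))"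
  using cyc_hd_last by (simp add: goodP_def unit_adj_def bdist_def)


lemma mem_img1[simp]: "(a, b) \<in> (\<lambda>x. (x, c)) ` S \<longleftrightarrow> a \<in> S \<and> b = c" by auto
lemma mem_img2[simp]: "(a, b) \<in> Pair c ` S \<longleftrightarrow> a = c \<and> b \<in> S" by auto

lemma set_srow: "set (srow l m y) = {3..l-1} \<times> {y}"
  by (auto simp: srow_def)

lemma set_snake: "set (snake l m) = {3..l-1} \<times> {r0 m..m-1}"
  by (auto simp: snake_def set_srow)

lemma set_zig: "set (zig l m) = (if even m then {} else {3..l-1} \<times> {2, 3})"
  by (auto simp: zig_def zcol_def split: if_splits)

lemma set_bnd: "set (bnd l m) = {1} \<times> {1..m} \<union> {l} \<times> {1..m} \<union> {1..l} \<times> {1} \<union> {1..l} \<times> {m}"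
  using l m by (auto simp: bnd_def)

lemma set_colp: "set (colp m) = {2} \<times> {2..m-2}"
  by (auto simp: colp_def)

lemma cyc_set: "set (cyc l m) = rect l m"
proof
  show "set (cyc l m) \<subseteq> rect l m"
    using l m unfolding cyc_def set_append set_bnd set_colp set_zig set_snake rect_def r0_def
    by auto
next
  show "rect l m \<subseteq> set (cyc l m)"
  proof
    fix p assume "p \<in> rect l m"
    then obtain x y where p: "p = (x, y)" "1 \<le> x" "x \<le> l" "1 \<le> y" "y \<le> m"
      by (auto simp: rect_def)
    have "(x, y) \<in> set (bnd l m) \<union> set (colp m) \<union> set (zig l m) \<union> set (snake l m) \<union> {(2, m - 1)}"
      unfolding set_bnd set_colp set_zig set_snake r0_def
      using p by auto
    then show "p \<in> set (cyc l m)" using p by (auto simp: cyc_def)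
  qed
qed

lemma cyc_length: "int (length (cyc l m)) = l * m"
proof -
  have ls: "length (snake l m) = nat (m - r0 m) * nat (l - 3)"
    unfolding snake_def by (subst length_concat_const[where k = "nat (l - 3)"]) (auto simp: srow_def)
  have lz: "length (zig l m) = (if even m then 0 else nat (l - 3) * 2)"
    unfolding zig_def by (auto simp: length_concat_const[where k = 2] zcol_def)
  show ?thesis
    using l m ls lz unfolding cyc_def
    by (cases "even m") (simp_all add: bnd_def colp_def r0_def algebra_simps)
qed

lemma pairs_rev_map_upto: "pairs (rev (map f [a..b])) = (\<lambda>y. (f y, f (y - 1))) ` {a+1..b}"
proof -
  have "(\<lambda>(p, q). (q, p)) ` (\<lambda>x. (f x, f (x + 1))) ` {a..<b} = (\<lambda>x. (f (x + 1), f x)) ` {a..<b}"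
    by (auto simp: image_image)
  also have "\<dots> = (\<lambda>y. (f y, f (y - 1))) ` {a+1..b}"
  proof
    show "(\<lambda>x. (f (x + 1), f x)) ` {a..<b} \<subseteq> (\<lambda>y. (f y, f (y - 1))) ` {a+1..b}"
    proof
      fix z assume "z \<in> (\<lambda>x. (f (x + 1), f x)) ` {a..<b}"
      then obtain x where "x \<in> {a..<b}" "z = (f (x + 1), f x)" by blast
      then show "z \<in> (\<lambda>y. (f y, f (y - 1))) ` {a+1..b}" by (intro image_eqI[of _ _ "x + 1"]) auto
    qed
    show "(\<lambda>y. (f y, f (y - 1))) ` {a+1..b} \<subseteq> (\<lambda>x. (f (x + 1), f x)) ` {a..<b}"
    proof
      fix z assume "z \<in> (\<lambda>y. (f y, f (y - 1))) ` {a+1..b}"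
      then obtain y where "y \<in> {a+1..b}" "z = (f y, f (y - 1))" by blast
      then show "z \<in> (\<lambda>x. (f (x + 1), f x)) ` {a..<b}" by (intro image_eqI[of _ _ "y - 1"]) auto
    qed
  qed
  finally show ?thesis unfolding pairs_rev pairs_map_upto .
qed

lemma pairs_bnd: "pairs (bnd l m) = {((1, m - 1), (1, m)), ((1, m), (2, m))} \<union> (\<lambda>x. ((x, m), (x + 1, m))) ` {2..<l}
   \<union> {((l, m), (l, m - 1))} \<union> (\<lambda>y. ((l, y), (l, y - 1))) ` {2..m-1} \<union> {((l, 1), (l - 1, 1))}
   \<union> (\<lambda>x. ((x, 1), (x - 1, 1))) ` {2..l-1} \<union> {((1, 1), (1, 2))} \<union> (\<lambda>y. ((1, y), (1, y + 1))) ` {2..<m-2}"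
proof -
  define T1 where "T1 = map (\<lambda>x. (x, m)) [2..l]"
  define T2 where "T2 = rev (map (\<lambda>y. (l, y)) [1..m-1])"
  define T3 where "T3 = rev (map (\<lambda>x. (x, 1::int)) [1..l-1])"
  define T4 where "T4 = map (\<lambda>y. (1::int, y)) [2..m-2]"
  have b: "bnd l m = [(1, m - 1)] @ [(1, m)] @ T1 @ T2 @ T3 @ T4"
    unfolding bnd_def T1_def T2_def T3_def T4_def by simp
  have h: "T1 \<noteq> []" "T2 \<noteq> []" "T3 \<noteq> []" "T4 \<noteq> []"
    "hd T1 = (2, m)" "last T1 = (l, m)" "hd T2 = (l, m - 1)" "last T2 = (l, 1)"
    "hd T3 = (l - 1, 1)" "last T3 = (1, 1)" "hd T4 = (1, 2)"
    using l m unfolding T1_def T2_def T3_def T4_def by simp_all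
  have p: "pairs T1 = (\<lambda>x. ((x, m), (x + 1, m))) ` {2..<l}"
    "pairs T2 = (\<lambda>y. ((l, y), (l, y - 1))) ` {2..m-1}"
    "pairs T3 = (\<lambda>x. ((x, 1), (x - 1, 1))) ` {2..l-1}"
    "pairs T4 = (\<lambda>y. ((1, y), (1, y + 1))) ` {2..<m-2}"
    unfolding T1_def T2_def T3_def T4_def pairs_map_upto pairs_rev_map_upto by simp_all
  have ne: "T3 @ T4 \<noteq> []" "T2 @ T3 @ T4 \<noteq> []" "T1 @ T2 @ T3 @ T4 \<noteq> []" using h by simp_all
  show ?thesis unfolding b pairs_append
    using h ne p by (simp only: if_False simp_thms hd_append h(1-4) list.sel append_Nil2 pairs_single if_False) auto
qed

lemma cw_in: assumes e: "e \<in> cw_boundary_edges l m" and ne: "e \<noteq> ((1, m - 2), (1, m - 1))"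
  shows "e \<in> pairs (bnd l m)"
  using e unfolding cw_boundary_edges_def
proof (elim UnE)
  assume "e \<in> {((x, m), (x + 1, m)) | x. 1 \<le> x \<and> x < l}"
  then obtain x where x: "e = ((x, m), (x + 1, m))" "1 \<le> x" "x < l" by blast
  show ?thesis
  proof (cases "x = 1")
    case True then show ?thesis using x unfolding pairs_bnd by simp
  next
    case False then have "x \<in> {2..<l}" using x by simp
    then show ?thesis using x unfolding pairs_bnd by blast
  qed
next
  assume "e \<in> {((l, y), (l, y - 1)) | y. 1 < y \<and> y \<le> m}"
  then obtain y where y: "e = ((l, y), (l, y - 1))" "1 < y" "y \<le> m" by blast
  show ?thesis
  proof (cases "y = m")
    case True then show ?thesis using y unfolding pairs_bnd by simp
  next
    case False then have "y \<in> {2..m-1}" using y by simp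
    then show ?thesis using y unfolding pairs_bnd by blast
  qed
next
  assume "e \<in> {((x, 1), (x - 1, 1)) | x. 1 < x \<and> x \<le> l}"
  then obtain x where x: "e = ((x, 1), (x - 1, 1))" "1 < x" "x \<le> l" by blast
  show ?thesis
  proof (cases "x = l")
    case True then show ?thesis using x unfolding pairs_bnd by simp
  next
    case False then have "x \<in> {2..l-1}" using x by simp
    then show ?thesis using x unfolding pairs_bnd by blast
  qed
next
  assume "e \<in> {((1, y), (1, y + 1)) | y. 1 \<le> y \<and> y < m}"
  then obtain y where y: "e = ((1, y), (1, y + 1))" "1 \<le> y" "y < m" by blast
  consider "y = 1" | "y = m - 1" | "y \<in> {2..<m-2}" using y ne by fastforce
  then show ?thesis
  proof cases
    case 1 then show ?thesis using y unfolding pairs_bnd by simp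
  next
    case 2 then show ?thesis using y unfolding pairs_bnd by simp
  next
    case 3 then show ?thesis using y unfolding pairs_bnd by blast
  qed
qed

end


lemma pairs_append_sub: "pairs xs \<subseteq> pairs (xs @ ys)"
  unfolding pairs_append by blast

lemma cycle_edges_pairs:
  assumes "xs \<noteq> []"
  shows "cycle_edges ((!) xs) (length xs) = pairs xs \<union> {(last xs, hd xs)}"
proof (rule set_eqI)
  fix e
  show "e \<in> cycle_edges ((!) xs) (length xs) \<longleftrightarrow> e \<in> pairs xs \<union> {(last xs, hd xs)}"
  proof
    assume "e \<in> cycle_edges ((!) xs) (length xs)"
    then obtain i where i: "i < length xs" "e = (xs ! i, xs ! (Suc i mod length xs))"
      by (auto simp: cycle_edges_def)
    show "e \<in> pairs xs \<union> {(last xs, hd xs)}"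
    proof (cases "Suc i < length xs")
      case True
      then show ?thesis using i pairs_nth[of "xs ! i" "xs ! Suc i" xs] by auto
    next
      case False
      then have si: "Suc i = length xs" using i by simp
      have i1: "i = length xs - 1" using si by linarith
      have "xs ! i = last xs" unfolding i1 using assms by (rule last_conv_nth[symmetric])
      moreover have "xs ! (Suc i mod length xs) = hd xs" unfolding si using assms by (simp add: hd_conv_nth)
      ultimately show ?thesis using i(2) by simp
    qed
  next
    assume "e \<in> pairs xs \<union> {(last xs, hd xs)}"
    then show "e \<in> cycle_edges ((!) xs) (length xs)"
    proof
      assume "e \<in> pairs xs"
      then obtain i where "Suc i < length xs" "e = (xs ! i, xs ! Suc i)"
        using pairs_nth[of "fst e" "snd e" xs] by auto
      then show ?thesis unfolding cycle_edges_def by (intro CollectI exI[of _ i]) auto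
    next
      assume "e \<in> {(last xs, hd xs)}"
      then have "e = (xs ! (length xs - 1), xs ! (Suc (length xs - 1) mod length xs))"
        using assms by (simp add: last_conv_nth hd_conv_nth)
      then show ?thesis unfolding cycle_edges_def using assms
        by (intro CollectI exI[of _ "length xs - 1"]) auto
    qed
  qed
qed

theorem lemma12p3:
  fixes d l m :: int
  assumes "d > 0" and "l > 90 * d" and "m > 90 * d" and "even (l * m)"
  shows "\<exists>c. is_dir_ham_cycle (rect l m) c (nat (l * m)) \<and>
     (\<exists>e0 \<in> cw_boundary_edges l m. \<forall>e \<in> cw_boundary_edges l m.
        e \<in> cycle_edges c (nat (l * m)) \<longleftrightarrow> e \<noteq> e0) \<and>
     (\<forall>p q. (p, q) \<in> cycle_edges c (nat (l * m)) \<and> bdist l m p > 4 \<and> bdist l m q > 4 \<longrightarrow>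
        q = (if even (m - snd p) then (fst p + 1, snd p) else (fst p - 1, snd p)))"
proof -
  have l: "l \<ge> 10" and m: "m \<ge> 10" using assms by linarith+
  define xs where "xs = cyc l m"
  have n: "length xs = nat (l * m)" using cyc_length[OF l m assms(4)] unfolding xs_def by linarith
  have ne: "xs \<noteq> []" using cyc_hd_last[OF l m assms(4)] unfolding xs_def by blast
  have E: "cycle_edges ((!) xs) (nat (l * m)) = pairs xs \<union> {(last xs, hd xs)}"
    using cycle_edges_pairs[OF ne] n by simp
  have G: "\<forall>(p, q) \<in> cycle_edges ((!) xs) (nat (l * m)). goodP l m p q"
  proof -
    have a1: "allP (goodP l m) xs" unfolding xs_def by (rule cyc_good[OF l m assms(4)])
    have a2: "goodP l m (last xs) (hd xs)" unfolding xs_def by (rule cyc_wrap[OF l m assms(4)])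
    show ?thesis unfolding E using a1 a2 unfolding allP_def by blast
  qed
  have S: "set xs = rect l m" using cyc_set[OF l m assms(4)] unfolding xs_def .
  have fin: "finite (rect l m)" by (simp add: rect_def)
  have card: "card (rect l m) = nat (l * m)"
    using l m by (simp add: rect_def card_cartesian_product nat_mult_distrib)
  have dist: "distinct xs" using S card n by (intro card_distinct) simp
  have ham: "is_dir_ham_cycle (rect l m) ((!) xs) (nat (l * m))"
    unfolding is_dir_ham_cycle_def
  proof (intro conjI allI impI)
    show "bij_betw ((!) xs) {..<nat (l * m)} (rect l m)"
      using dist S n by (intro bij_betw_nth) auto
    fix i assume "i < nat (l * m)"
    then have "(xs ! i, xs ! (Suc i mod nat (l * m))) \<in> cycle_edges ((!) xs) (nat (l * m))"
      unfolding cycle_edges_def by blast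
    then show "unit_adj (xs ! i) (xs ! (Suc i mod nat (l * m)))" using G by (auto simp: goodP_def)
  qed (use fin card in auto)
  have e0: "((1, m - 2), (1, m - 1)) \<in> cw_boundary_edges l m"
    using m unfolding cw_boundary_edges_def by force
  have sub: "pairs (bnd l m) \<subseteq> pairs xs"
    unfolding xs_def cyc_def by (rule pairs_append_sub)
  have G': "goodP l m p q" if "(p, q) \<in> cycle_edges ((!) xs) (nat (l * m))" for p q
    using G that by blast
  have B: "\<forall>e \<in> cw_boundary_edges l m.
        e \<in> cycle_edges ((!) xs) (nat (l * m)) \<longleftrightarrow> e \<noteq> ((1, m - 2), (1, m - 1))"
  proof
    fix e assume e: "e \<in> cw_boundary_edges l m"
    show "e \<in> cycle_edges ((!) xs) (nat (l * m)) \<longleftrightarrow> e \<noteq> ((1, m - 2), (1, m - 1))"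
    proof
      assume ce: "e \<in> cycle_edges ((!) xs) (nat (l * m))"
      show "e \<noteq> ((1, m - 2), (1, m - 1))"
      proof
        assume "e = ((1, m - 2), (1, m - 1))"
        then have "goodP l m (1, m - 2) (1, m - 1)" using G' ce by blast
        then show False by (simp add: goodP_def)
      qed
    next
      assume "e \<noteq> ((1, m - 2), (1, m - 1))"
      then have "e \<in> pairs xs" using cw_in[OF l m assms(4) e] sub by blast
      then show "e \<in> cycle_edges ((!) xs) (nat (l * m))" unfolding E by blast
    qed
  qed
  have D: "\<forall>p q. (p, q) \<in> cycle_edges ((!) xs) (nat (l * m)) \<and> bdist l m p > 4 \<and> bdist l m q > 4 \<longrightarrow>
        q = (if even (m - snd p) then (fst p + 1, snd p) else (fst p - 1, snd p))"
  proof (intro allI impI)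
    fix p q assume a: "(p, q) \<in> cycle_edges ((!) xs) (nat (l * m)) \<and> bdist l m p > 4 \<and> bdist l m q > 4"
    then have "goodP l m p q" using G' by blast
    then show "q = (if even (m - snd p) then (fst p + 1, snd p) else (fst p - 1, snd p))"
      using a unfolding goodP_def by blast
  qed
  show ?thesis
    apply (rule exI[of _ "(!) xs"])
    apply (intro conjI)
      apply (rule ham)
     apply (rule bexI[of _ "((1, m - 2), (1, m - 1))"])
      apply (rule B)
     apply (rule e0)
    apply (rule D)
    done
qed

end
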